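(* Let $\mathbb H=\mathbb R$ or $\mathbb C$, $\mathbf A\in\mathbb H^{m\times d}$, $\mathbf b\in\mathbb H^m$. Then neither $\mathbf M_{\mathbf A,\mathbf b}$ nor $\mathbf M^2_{\mathbf A,\mathbf b}$ is bi-Lipschitz on $\mathbb H^d$ (with respect to Euclidean norms).
   Context: For $\mathbf u,\mathbf v\in\mathbb H^d$, $\langle\mathbf u,\mathbf v\rangle=\sum_i\overline{u_i}v_i$. With $\mathbf A=(\mathbf a_1,\ldots,\mathbf a_m)^\top$ and $\mathbf b=(b_1,\ldots,b_m)^\top$, $\mathbf M_{\mathbf A,\mathbf b}(\mathbf x)=(|\langle\mathbf a_1,\mathbf x\rangle+b_1|,\ldots,|\langle\mathbf a_m,\mathbf x\rangle+b_m|)$ and $\mathbf M^2_{\mathbf A,\mathbf b}(\mathbf x)=(|\langle\mathbf a_1,\mathbf x\rangle+b_1|^2,\ldots,|\langle\mathbf a_m,\mathbf x\rangle+b_m|^2)$. A map $F$ is bi-Lipschitz on $\mathbb H^d$ if there are constants $0<c\le C$ with $c\|\mathbf x-\mathbf y\|\le\|F(\mathbf x)-F(\mathbf y)\|\le C\|\mathbf x-\mathbf y\|$ for all $\mathbf x,\mathbf y\in\mathbb H^d$. *)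

theory Defs
  imports "HOL-Analysis.Analysis"
begin

definition rinner :: "real^'d \<Rightarrow> real^'d \<Rightarrow> real" where
  "rinner u v = (\<Sum>i\<in>UNIV. u$i * v$i)"

definition cinner :: "complex^'d \<Rightarrow> complex^'d \<Rightarrow> complex" where
  "cinner u v = (\<Sum>i\<in>UNIV. cnj (u$i) * v$i)"

definition M_real :: "real^'d^'m \<Rightarrow> real^'m \<Rightarrow> real^'d \<Rightarrow> real^'m" where
  "M_real A b x = (\<chi> j. \<bar>rinner (A$j) x + b$j\<bar>)"

definition M2_real :: "real^'d^'m \<Rightarrow> real^'m \<Rightarrow> real^'d \<Rightarrow> real^'m" where
  "M2_real A b x = (\<chi> j. \<bar>rinner (A$j) x + b$j\<bar>^2)"

definition M_complex :: "complex^'d^'m \<Rightarrow> complex^'m \<Rightarrow> complex^'d \<Rightarrow> real^'m" where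
  "M_complex A b x = (\<chi> j. cmod (cinner (A$j) x + b$j))"

definition M2_complex :: "complex^'d^'m \<Rightarrow> complex^'m \<Rightarrow> complex^'d \<Rightarrow> real^'m" where
  "M2_complex A b x = (\<chi> j. (cmod (cinner (A$j) x + b$j))^2)"

definition bi_lipschitz :: "('a::real_normed_vector \<Rightarrow> 'b::real_normed_vector) \<Rightarrow> bool" where
  "bi_lipschitz F \<longleftrightarrow> (\<exists>c C. 0 < c \<and> c \<le> C \<and>
     (\<forall>x y. c * norm (x - y) \<le> norm (F x - F y) \<and> norm (F x - F y) \<le> C * norm (x - y)))"

end

theory Submission
  imports Defs
begin

lemma nbl_sym:
  fixes F :: "'a::{real_normed_vector,perfect_space} \<Rightarrow> real^'m"
  assumes K: "\<And>x. norm (F x - F (-x)) \<le> K"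
  shows "\<not> bi_lipschitz F"
proof
  assume "bi_lipschitz F"
  then obtain c C where c: "0 < c" and H: "\<And>x y. c * norm (x - y) \<le> norm (F x - F y)"
    unfolding bi_lipschitz_def by blast
  have K0: "0 \<le> K" using K[of 0] by simp
  obtain x :: 'a where nx: "norm x = (K+1)/(2*c)"
    using vector_choose_size[of "(K+1)/(2*c)"] K0 c by auto
  have "x - - x = 2 *\<^sub>R x" by (simp add: scaleR_2)
  hence "norm (x - - x) = 2 * norm x" by simp
  hence "c * norm (x - - x) = K + 1" using nx c by (simp add: field_simps)
  with H[of x "-x"] K[of x] show False by linarith
qed

lemma nbl_const:
  fixes F :: "'a::{real_normed_vector,perfect_space} \<Rightarrow> real^'m"
  assumes K: "\<And>x. F x = F 0"
  shows "\<not> bi_lipschitz F"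
proof
  assume "bi_lipschitz F"
  then obtain c C where c: "0 < c" and H: "\<And>x y. c * norm (x - y) \<le> norm (F x - F y)"
    unfolding bi_lipschitz_def by blast
  obtain x :: 'a where nx: "norm x = 1"
    using vector_choose_size[of 1] by auto
  show False using H[of x 0] K[of x] nx c by simp
qed

lemma nbl_quad:
  fixes F :: "'a::real_normed_vector \<Rightarrow> real^'m"
  assumes E: "\<And>s::real. F (s *\<^sub>R z) $ j - F 0 $ j = \<alpha> * s ^ 2 + \<beta> * s" and a: "\<alpha> > 0"
  shows "\<not> bi_lipschitz F"
proof
  assume "bi_lipschitz F"
  then obtain c C where c: "0 < c" "c \<le> C" and H: "\<And>x y. norm (F x - F y) \<le> C * norm (x - y)"
    unfolding bi_lipschitz_def by blast
  define s where "s = (\<bar>\<beta>\<bar> + C * norm z + 1) / \<alpha>"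
  have C0: "C \<ge> 0" using c by simp
  have sp: "s > 0" unfolding s_def using a C0 by (intro divide_pos_pos) (auto intro: add_nonneg_pos)
  have as: "\<alpha> * s = \<bar>\<beta>\<bar> + C * norm z + 1" unfolding s_def using a by simp
  have "\<alpha> * s ^ 2 + \<beta> * s \<le> \<bar>(F (s *\<^sub>R z) - F 0) $ j\<bar>" using E[of s] by simp
  also have "\<dots> \<le> norm (F (s *\<^sub>R z) - F 0)" by (rule component_le_norm_cart)
  also have "\<dots> \<le> C * norm (s *\<^sub>R z - 0)" by (rule H)
  also have "\<dots> = s * (C * norm z)" using sp by simp
  finally have 1: "\<alpha> * s ^ 2 + \<beta> * s \<le> s * (C * norm z)" .
  have "\<alpha> * s ^ 2 + \<beta> * s = s * (\<alpha> * s + \<beta>)" by (simp add: power2_eq_square algebra_simps)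
  also have "\<dots> = s * (\<bar>\<beta>\<bar> + \<beta> + C * norm z + 1)" using as by simp
  also have "\<dots> \<ge> s * (C * norm z + 1)" using sp by (intro mult_left_mono) auto
  finally show False using 1 sp by (simp add: algebra_simps)
qed

lemma rinner_neg: "rinner a (-x) = - rinner a x"
  by (simp add: rinner_def sum_negf)
lemma cinner_neg: "cinner a (-x) = - cinner a x"
  by (simp add: cinner_def sum_negf)
lemma rinner_zero: "rinner a 0 = 0" by (simp add: rinner_def)
lemma cinner_zero: "cinner a 0 = 0" by (simp add: cinner_def)

lemma Mr: "\<not> bi_lipschitz (M_real A b)"
proof (rule nbl_sym[where K="\<Sum>j\<in>UNIV. 2 * \<bar>b$j\<bar>"])
  fix x
  have "norm (M_real A b x - M_real A b (-x)) \<le> (\<Sum>j\<in>UNIV. \<bar>(M_real A b x - M_real A b (-x))$j\<bar>)"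
    by (rule norm_le_l1_cart)
  also have "\<dots> \<le> (\<Sum>j\<in>UNIV. 2 * \<bar>b$j\<bar>)"
  proof (rule sum_mono)
    fix j
    show "\<bar>(M_real A b x - M_real A b (-x))$j\<bar> \<le> 2 * \<bar>b$j\<bar>"
      by (simp add: M_real_def rinner_neg)
  qed
  finally show "norm (M_real A b x - M_real A b (-x)) \<le> (\<Sum>j\<in>UNIV. 2 * \<bar>b$j\<bar>)" .
qed

lemma cm_bound: "\<bar>cmod (r + b) - cmod (- r + b)\<bar> \<le> 2 * cmod b"
proof -
  have e: "cmod (- r + b) = cmod (r - b)" by (metis minus_diff_eq norm_minus_cancel uminus_add_conv_diff)
  have 1: "cmod (r + b) \<le> cmod (r - b) + cmod (2*b)"
    using norm_triangle_ineq[of "r-b" "2*b"] by (simp add: algebra_simps)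
  have 2: "cmod (r - b) \<le> cmod (r + b) + cmod (2*b)"
    using norm_triangle_ineq4[of "r+b" "2*b"] by (simp add: algebra_simps)
  have "cmod (2*b) = 2 * cmod b" by (simp add: norm_mult)
  with 1 2 e show ?thesis by linarith
qed

lemma Mc: "\<not> bi_lipschitz (M_complex A b)"
proof (rule nbl_sym[where K="\<Sum>j\<in>UNIV. 2 * cmod (b$j)"])
  fix x
  have "norm (M_complex A b x - M_complex A b (-x)) \<le> (\<Sum>j\<in>UNIV. \<bar>(M_complex A b x - M_complex A b (-x))$j\<bar>)"
    by (rule norm_le_l1_cart)
  also have "\<dots> \<le> (\<Sum>j\<in>UNIV. 2 * cmod (b$j))"
  proof (rule sum_mono)
    fix j
    show "\<bar>(M_complex A b x - M_complex A b (-x))$j\<bar> \<le> 2 * cmod (b$j)"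
      using cm_bound[of "cinner (A$j) x" "b$j"] by (simp add: M_complex_def cinner_neg)
  qed
  finally show "norm (M_complex A b x - M_complex A b (-x)) \<le> (\<Sum>j\<in>UNIV. 2 * cmod (b$j))" .
qed

lemma M2r: "\<not> bi_lipschitz (M2_real A b)"
proof (cases "\<exists>j. A$j \<noteq> 0")
  case False
  hence "\<And>j. A$j = 0" by blast
  hence "\<And>x. M2_real A b x = M2_real A b 0"
    by (simp add: M2_real_def rinner_def)
  thus ?thesis by (rule nbl_const)
next
  case True
  then obtain j where aj: "A$j \<noteq> 0" by blast
  define q where "q = (\<Sum>i\<in>UNIV. (A$j$i)^2)"
  have qpos: "q > 0"
  proof -
    obtain i where "A$j$i \<noteq> 0" using aj by (metis vec_eq_iff zero_index)
    hence "(A$j$i)^2 > 0" by simp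
    moreover have "(A$j$i)^2 \<le> q" unfolding q_def
      by (rule member_le_sum) auto
    ultimately show ?thesis by linarith
  qed
  have ri: "\<And>s. rinner (A$j) (s *\<^sub>R A$j) = s * q"
    by (simp add: rinner_def q_def sum_distrib_left power2_eq_square algebra_simps)
  show ?thesis
  proof (rule nbl_quad[where z="A$j" and j=j and \<alpha>="q^2" and \<beta>="2*q*b$j"])
    fix s :: real
    show "M2_real A b (s *\<^sub>R A$j) $ j - M2_real A b 0 $ j = (q^2) * (s^2) + (2*q*(b$j)) * s"
      by (simp add: M2_real_def ri rinner_zero power2_eq_square algebra_simps)
  qed (use qpos in simp)
qed

lemma M2c: "\<not> bi_lipschitz (M2_complex A b)"
proof (cases "\<exists>j. A$j \<noteq> 0")
  case False
  hence "\<And>j. A$j = 0" by blast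
  hence "\<And>x. M2_complex A b x = M2_complex A b 0"
    by (simp add: M2_complex_def cinner_def)
  thus ?thesis by (rule nbl_const)
next
  case True
  then obtain j where aj: "A$j \<noteq> 0" by blast
  define q where "q = (\<Sum>i\<in>UNIV. (cmod (A$j$i))^2)"
  have qpos: "q > 0"
  proof -
    obtain i where "A$j$i \<noteq> 0" using aj by (metis vec_eq_iff zero_index)
    hence "(cmod (A$j$i))^2 > 0" by simp
    moreover have "(cmod (A$j$i))^2 \<le> q" unfolding q_def
      by (rule member_le_sum) auto
    ultimately show ?thesis by linarith
  qed
  have ri: "\<And>s. cinner (A$j) (s *\<^sub>R A$j) = complex_of_real (s * q)"
  proof -
    fix s
    have cs: "\<And>i. (s *\<^sub>R A$j)$i = complex_of_real s * A$j$i"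
      using vector_scaleR_component[of s "A$j"] scaleR_conv_of_real[of s "A$j$i" for i] by simp
    have "cinner (A$j) (s *\<^sub>R A$j) = (\<Sum>i\<in>UNIV. complex_of_real (s * (cmod (A$j$i))^2))"
      unfolding cinner_def
    proof (rule sum.cong[OF refl])
      fix i
      have "cnj (A$j$i) * (complex_of_real s * A$j$i) = complex_of_real s * (cnj (A$j$i) * A$j$i)"
        by (simp add: algebra_simps)
      also have "\<dots> = complex_of_real (s * (cmod (A$j$i))^2)"
        by (metis complex_norm_square mult.commute of_real_mult)
      finally show "cnj (A$j$i) * (s *\<^sub>R A$j)$i = complex_of_real (s * (cmod (A$j$i))^2)"
        by (simp only: cs)
    qed
    also have "\<dots> = complex_of_real (s * q)"
      by (simp add: q_def sum_distrib_left)
    finally show "cinner (A$j) (s *\<^sub>R A$j) = complex_of_real (s * q)" .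
  qed
  have cm: "\<And>t::real. (cmod (complex_of_real t + b$j))^2 - (cmod (b$j))^2 = t^2 + 2*Re (b$j)*t"
    unfolding cmod_power2 by (simp add: power2_eq_square algebra_simps)
  show ?thesis
  proof (rule nbl_quad[where z="A$j" and j=j and \<alpha>="q^2" and \<beta>="2*q*Re (b$j)"])
    fix s :: real
    show "M2_complex A b (s *\<^sub>R A$j) $ j - M2_complex A b 0 $ j = (q^2) * (s^2) + (2*q*Re (b$j)) * s"
      using cm[of "s*q"] by (simp add: M2_complex_def ri cinner_zero power2_eq_square algebra_simps)
  qed (use qpos in simp)
qed

theorem proposition4p2:
  fixes Ar :: "real^'d^'m" and br :: "real^'m"
    and Ac :: "complex^'d^'m" and bc :: "complex^'m"
  shows "\<not> bi_lipschitz (M_real Ar br) \<and> \<not> bi_lipschitz (M2_real Ar br)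
       \<and> \<not> bi_lipschitz (M_complex Ac bc) \<and> \<not> bi_lipschitz (M2_complex Ac bc)"
  using Mr M2r Mc M2c by blast

end
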